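(* Let ${\mathscr X}$ be a Hausdorff space and consider the set $M^1({\mathscr X})$ of Radon probability measures on ${\mathscr X}$ with the weak topology; assume $M^1({\mathscr X})$ is Hausdorff and that $P\mapsto P(A)$ is Borel measurable on $M^1({\mathscr X})$ for every Borel $A\subset{\mathscr X}$. Let $\Pi$ be a Borel probability measure on $M^1({\mathscr X})$ and let $G$ be its mean measure. Then $\{P\in M^1({\mathscr X}):P\ll G\}$ is closed in $M^1({\mathscr X})$ and the (weak) support of $\Pi$ satisfies $${\mathrm{supp}}(\Pi)\subset\{P\in M^1({\mathscr X}):P\ll G\}.$$
   Context: The weak topology on $M^1({\mathscr X})$ is the coarsest topology making $P\mapsto\int h\,dP$ continuous for every bounded Borel measurable $h:{\mathscr X}\to\mathbb{R}$. The mean measure of $\Pi$ is the Borel probability measure $G(A)=\int_{M^1({\mathscr X})}P(A)\,d\Pi(P)$. The support of $\Pi$ is the set of $P$ all of whose open neighbourhoods have positive $\Pi$-mass. *)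

theory Defs
  imports "HOL-Probability.Probability"
begin

definition radon_prob :: "'a::topological_space measure \<Rightarrow> bool" where
  "radon_prob P \<longleftrightarrow> prob_space P \<and> sets P = sets borel \<and>
     (\<forall>A\<in>sets borel. emeasure P A = (SUP K\<in>{K. compact K \<and> K \<subseteq> A}. emeasure P K))"

definition M1 :: "'a::topological_space measure set" where
  "M1 = {P. radon_prob P}"

definition weak_top :: "'a::topological_space measure topology" where
  "weak_top = topology_generated_by
     {{P \<in> M1. (\<integral>x. h x \<partial>P) \<in> U} | (h :: 'a \<Rightarrow> real) U.
        h \<in> borel_measurable borel \<and> bounded (range h) \<and> open U}"

definition borel_of :: "'b topology \<Rightarrow> 'b measure" where
  "borel_of T = sigma (topspace T) {U. openin T U}"

definition mean_measure :: "'a::topological_space measure measure \<Rightarrow> 'a measure" where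
  "mean_measure Pi_m = measure_of UNIV (sets borel) (\<lambda>A. \<integral>\<^sup>+ P. emeasure P A \<partial>Pi_m)"

definition weak_support :: "'a::topological_space measure measure \<Rightarrow> 'a measure set" where
  "weak_support Pi_m = {P \<in> topspace weak_top.
      \<forall>U. openin weak_top U \<and> P \<in> U \<longrightarrow> emeasure Pi_m U > 0}"

end

theory Submission
  imports Defs
begin

lemma topspace_weak: "topspace (weak_top :: 'a::topological_space measure topology) = M1"
proof -
  let ?S = "{{P \<in> M1. (\<integral>x. h x \<partial>P) \<in> U} | (h :: 'a \<Rightarrow> real) U.
        h \<in> borel_measurable borel \<and> bounded (range h) \<and> open U}"
  have "(M1::'a measure set) \<in> ?S"
    by (rule CollectI, rule exI[of _ "\<lambda>_. 0::real"], rule exI[of _ UNIV]) simp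
  moreover have "\<Union>?S \<subseteq> M1" by auto
  ultimately have "\<Union>?S = M1" by blast
  then show ?thesis unfolding weak_top_def by simp
qed

lemma open_pos:
  assumes "A \<in> sets borel"
  shows "openin weak_top {P \<in> (M1::'a::topological_space measure set). emeasure P A \<noteq> 0}"
proof -
  have eq: "{P \<in> (M1::'a measure set). emeasure P A \<noteq> 0}
      = {P \<in> M1. (\<integral>x. indicator A x \<partial>P) \<in> {0::real<..}}"
  proof (intro Collect_cong conj_cong refl)
    fix P :: "'a measure" assume "P \<in> M1"
    then have ps: "prob_space P" and s: "sets P = sets borel"
      by (auto simp: M1_def radon_prob_def)
    then have A: "A \<in> sets P" using assms by simp
    interpret prob_space P by (rule ps)
    have I: "(\<integral>x. indicator A x \<partial>P) = measure P A"
      using A by (simp)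
    then show "(emeasure P A \<noteq> 0) = ((\<integral>x. indicator A x \<partial>P) \<in> {0::real<..})"
      using I emeasure_eq_measure[of A] measure_nonneg[of P A]
      by (simp add: less_le)
  qed
  have "bounded (range (indicator A :: 'a \<Rightarrow> real))"
    by (rule boundedI[where B=1]) (auto simp: indicator_def)
  moreover have "(indicator A :: 'a \<Rightarrow> real) \<in> borel_measurable borel"
    using assms by simp
  ultimately show ?thesis unfolding eq weak_top_def
    by (intro topology_generated_by_Basis CollectI exI[of _ "indicator A"] exI[of _ "{0::real<..}"]) simp
qed

lemma sets_mean: "sets (mean_measure Pi_m) = sets borel"
  unfolding mean_measure_def
  by (simp add: sets_measure_of_conv sets.sigma_sets_eq[of borel, simplified])

lemma space_Pi:
  assumes "sets Pi_m = sets (borel_of (weak_top :: 'a::topological_space measure topology))"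
  shows "space Pi_m = M1"
proof -
  have "space Pi_m = space (borel_of (weak_top :: 'a measure topology))"
    using sets_eq_imp_space_eq[OF assms] .
  also have "\<dots> = topspace weak_top"
    unfolding borel_of_def by (simp add: space_measure_of_conv)
  finally show ?thesis by (simp add: topspace_weak)
qed

lemma emeasure_mean:
  assumes meas: "\<And>A. A \<in> sets borel \<Longrightarrow> (\<lambda>P. emeasure P A) \<in> borel_measurable (borel_of (weak_top :: 'a::topological_space measure topology))"
    and s: "sets Pi_m = sets (borel_of (weak_top :: 'a measure topology))"
    and A: "A \<in> sets borel"
  shows "emeasure (mean_measure Pi_m) A = (\<integral>\<^sup>+ P. emeasure P A \<partial>Pi_m)"
  unfolding mean_measure_def
proof (rule emeasure_measure_of_sigma[OF _ _ _ A])
  show "sigma_algebra UNIV (sets (borel :: 'a measure))"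
    using sets.sigma_algebra_axioms[of "borel :: 'a measure"] by simp
  show "positive (sets borel) (\<lambda>A. \<integral>\<^sup>+ P. emeasure P A \<partial>Pi_m)"
    by (simp add: positive_def)
  have mc: "measurable Pi_m (borel :: ennreal measure) = measurable (borel_of (weak_top :: 'a measure topology)) borel"
    by (rule measurable_cong_sets[OF s refl])
  have m: "(\<lambda>P. emeasure P A) \<in> borel_measurable Pi_m" if "A \<in> sets borel" for A
    using meas[OF that] unfolding mc .
  show "countably_additive (sets borel) (\<lambda>A. \<integral>\<^sup>+ P. emeasure P A \<partial>Pi_m)"
    unfolding countably_additive_def
  proof (intro allI impI)
    fix F :: "nat \<Rightarrow> 'a set"
    assume F: "range F \<subseteq> sets borel" "disjoint_family F" "\<Union> (range F) \<in> sets borel"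
    have "(\<Sum>i. \<integral>\<^sup>+ P. emeasure P (F i) \<partial>Pi_m) = (\<integral>\<^sup>+ P. (\<Sum>i. emeasure P (F i)) \<partial>Pi_m)"
      using F m by (intro nn_integral_suminf[symmetric]) auto
    also have "\<dots> = (\<integral>\<^sup>+ P. emeasure P (\<Union> (range F)) \<partial>Pi_m)"
    proof (rule nn_integral_cong)
      fix P assume "P \<in> space Pi_m"
      then have "sets P = sets borel" using space_Pi[OF s] by (auto simp: M1_def radon_prob_def)
      then show "(\<Sum>i. emeasure P (F i)) = emeasure P (\<Union> (range F))"
        using F by (intro suminf_emeasure) auto
    qed
    finally show "(\<Sum>i. \<integral>\<^sup>+ P. emeasure P (F i) \<partial>Pi_m) = (\<integral>\<^sup>+ P. emeasure P (\<Union> (range F)) \<partial>Pi_m)" .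
  qed
qed

theorem mainTheorem4:
  fixes Pi_m :: "('a::t2_space) measure measure"
  assumes "Hausdorff_space (weak_top :: 'a measure topology)"
    and "\<And>A. A \<in> sets borel \<Longrightarrow> (\<lambda>P. emeasure P A) \<in> borel_measurable (borel_of (weak_top :: 'a measure topology))"
    and "prob_space Pi_m"
    and "sets Pi_m = sets (borel_of (weak_top :: 'a measure topology))"
  shows "closedin weak_top {P \<in> M1. absolutely_continuous (mean_measure Pi_m) P}
     \<and> weak_support Pi_m \<subseteq> {P \<in> M1. absolutely_continuous (mean_measure Pi_m) P}"
proof
  let ?G = "mean_measure Pi_m"
  let ?N = "{A \<in> sets borel. emeasure ?G A = 0}"
  have ac_iff: "absolutely_continuous ?G P \<longleftrightarrow> (\<forall>A\<in>?N. emeasure P A = 0)" if "P \<in> M1" for P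
  proof -
    have sP: "sets P = sets borel" using that by (simp add: M1_def radon_prob_def)
    show ?thesis
      unfolding absolutely_continuous_def null_sets_def sets_mean[of Pi_m] sP by auto
  qed
  have compl: "M1 - {P \<in> M1. absolutely_continuous ?G P} = (\<Union>A\<in>?N. {P \<in> M1. emeasure P A \<noteq> 0})"
  proof (intro equalityI subsetI)
    fix P assume "P \<in> M1 - {P \<in> M1. absolutely_continuous ?G P}"
    then have "P \<in> M1" "\<not> (\<forall>A\<in>?N. emeasure P A = 0)" using ac_iff by auto
    then show "P \<in> (\<Union>A\<in>?N. {P \<in> M1. emeasure P A \<noteq> 0})" by blast
  next
    fix P assume "P \<in> (\<Union>A\<in>?N. {P \<in> M1. emeasure P A \<noteq> 0})"
    then have "P \<in> M1" "\<not> (\<forall>A\<in>?N. emeasure P A = 0)" by auto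
    then show "P \<in> M1 - {P \<in> M1. absolutely_continuous ?G P}" using ac_iff by blast
  qed
  have "openin weak_top (\<Union>A\<in>?N. {P \<in> M1. emeasure P A \<noteq> 0})"
    by (rule openin_Union) (clarsimp, rule open_pos, simp)
  then show "closedin weak_top {P \<in> M1. absolutely_continuous ?G P}"
    unfolding closedin_def topspace_weak compl by blast
  show "weak_support Pi_m \<subseteq> {P \<in> M1. absolutely_continuous ?G P}"
  proof
    fix P assume P: "P \<in> weak_support Pi_m"
    then have PM: "P \<in> M1" by (simp add: weak_support_def topspace_weak)
    show "P \<in> {P \<in> M1. absolutely_continuous ?G P}"
    proof (rule ccontr)
      assume "P \<notin> {P \<in> M1. absolutely_continuous ?G P}"
      then obtain A where A: "A \<in> sets borel" "emeasure ?G A = 0" "emeasure P A \<noteq> 0"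
        using ac_iff[OF PM] PM by auto
      let ?U = "{Q \<in> M1. emeasure Q A \<noteq> 0}"
      have o: "openin weak_top ?U" by (rule open_pos[OF A(1)])
      have "P \<in> ?U" using PM A by simp
      then have "emeasure Pi_m ?U > 0"
        using P o unfolding weak_support_def by blast
      moreover have "emeasure Pi_m ?U = 0"
      proof -
        have mc: "measurable Pi_m (borel :: ennreal measure) = measurable (borel_of (weak_top :: 'a measure topology)) borel"
          by (rule measurable_cong_sets[OF assms(4) refl])
        have m: "(\<lambda>P. emeasure P A) \<in> borel_measurable Pi_m"
          using assms(2)[OF A(1)] unfolding mc .
        have "(\<integral>\<^sup>+ Q. emeasure Q A \<partial>Pi_m) = 0"
          using A emeasure_mean[OF assms(2) assms(4) A(1)] by simp
        then have ae: "AE Q in Pi_m. emeasure Q A = 0"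
          using nn_integral_0_iff_AE[OF m] by simp
        have Ueq: "{Q \<in> space Pi_m. \<not> emeasure Q A = 0} = ?U"
          using space_Pi[OF assms(4)] by simp
        have "(\<lambda>P. emeasure P A) -` (-{0}) \<inter> space Pi_m \<in> sets Pi_m"
          by (rule measurable_sets[OF m]) simp
        moreover have "(\<lambda>P. emeasure P A) -` (-{0}) \<inter> space Pi_m = ?U"
          using Ueq by blast
        ultimately have Us: "?U \<in> sets Pi_m" by simp
        show ?thesis
          using ae AE_iff_measurable[OF Us Ueq] by blast
      qed
      ultimately show False by simp
    qed
  qed
qed

end
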